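(* Let $n,m\ge1$, let $\mu\in\mathbb{R}^n_{\ge0}$, $\nu\in\mathbb{R}^m_{\ge0}$ be probability vectors, let $D_X\in\mathbb{R}^{n\times n}$, $D_Y\in\mathbb{R}^{m\times m}$ be symmetric, let $C_1=\{\pi\ge0:\pi\mathbf{1}_m=\mu\}$, $C_2=\{\pi\ge0:\pi^T\mathbf{1}_n=\nu\}$ in $\mathbb{R}^{n\times m}$, let $f(\pi,w)=-\mathrm{Tr}(D_X\pi D_Yw^T)$, and let $\rho>0$. Take $h(x)=\tfrac12\|x\|^2$, so $D_h(x,y)=\tfrac12\|x-y\|^2$, and define $$F_\rho(\pi,w)=f(\pi,w)+\mathbb{I}_{C_1}(\pi)+\mathbb{I}_{C_2}(w)+\tfrac{\rho}{2}\|\pi-w\|^2.$$ Let $\{(\pi^k,w^k)\}_{k\ge0}$ be generated from an initial point by $$\pi^{k+1}=\arg\min_{\pi\in C_1}\{f(\pi,w^k)+\tfrac{\rho}{2}\|\pi-w^k\|^2\},\qquad w^{k+1}=\arg\min_{w\in C_2}\{f(\pi^{k+1},w)+\tfrac{\rho}{2}\|w-\pi^{k+1}\|^2\}.$$ Then the sequence $\{(\pi^k,w^k)\}$ converges to a critical point of $F_\rho$, i.e. to a point $(\bar\pi,\bar w)$ with $0\in\partial F_\rho(\bar\pi,\bar w)$.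
   Context: $\|\cdot\|$ is the Frobenius norm; $\pi\ge0$ is entrywise; $\mathbb{I}_C$ is the indicator function of $C$ ($0$ on $C$, $+\infty$ outside); $\partial F_\rho$ denotes the (limiting) subdifferential, which here equals $\nabla f(\pi,w)+\rho(\pi-w,\,w-\pi)+\mathcal{N}_{C_1}(\pi)\times\mathcal{N}_{C_2}(w)$ for $\pi\in C_1,w\in C_2$, with $\mathcal{N}_C$ the normal cone. *)

theory Defs
  imports "HOL-Analysis.Analysis"
begin

text \<open>Matrices in R^(n x m) are represented as real^'m^'n (rows indexed by 'n).
  The norm on this type is the Frobenius norm and the inner product is the
  Frobenius inner product.\<close>

definition prob_vec :: "real^'n \<Rightarrow> bool" where
  "prob_vec v \<longleftrightarrow> (\<forall>i. v $ i \<ge> 0) \<and> (\<Sum>i\<in>UNIV. v $ i) = 1"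

definition C1 :: "real^'n \<Rightarrow> (real^'m^'n) set" where
  "C1 \<mu> = {p. (\<forall>i j. p $ i $ j \<ge> 0) \<and> p *v (\<chi> j. 1) = \<mu>}"

definition C2 :: "real^'m \<Rightarrow> (real^'m^'n) set" where
  "C2 \<nu> = {p. (\<forall>i j. p $ i $ j \<ge> 0) \<and> transpose p *v (\<chi> i. 1) = \<nu>}"

definition gw_obj :: "real^'n^'n \<Rightarrow> real^'m^'m \<Rightarrow> real^'m^'n \<Rightarrow> real^'m^'n \<Rightarrow> real" where
  "gw_obj DX DY p w = - trace (DX ** p ** DY ** transpose w)"

definition normal_cone :: "'a::real_inner set \<Rightarrow> 'a \<Rightarrow> 'a set" where
  "normal_cone C x = {v. \<forall>y\<in>C. inner v (y - x) \<le> 0}"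

text \<open>Critical point of F_rho = f + I_C1 + I_C2 + rho/2 ||pi - w||^2:
  0 \<in> \<nabla>f(pi,w) + rho(pi - w, w - pi) + N_C1(pi) x N_C2(w), with pi \<in> C1, w \<in> C2.\<close>
definition critical_F ::
  "((real^'m^'n) \<times> (real^'m^'n) \<Rightarrow> real) \<Rightarrow> (real^'m^'n) set \<Rightarrow> (real^'m^'n) set
    \<Rightarrow> real \<Rightarrow> real^'m^'n \<Rightarrow> real^'m^'n \<Rightarrow> bool" where
  "critical_F f A B \<rho> p w \<longleftrightarrow> p \<in> A \<and> w \<in> B \<and>
     (\<exists>G. (f has_derivative (\<lambda>h. inner G h)) (at (p, w)) \<and>
          - (G + (\<rho> *\<^sub>R (p - w), \<rho> *\<^sub>R (w - p))) \<in> normal_cone A p \<times> normal_cone B w)"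

end

theory Submission imports Defs begin


lemma proj_exists:
  fixes S :: "'a::euclidean_space set"
  assumes "subspace S"
  obtains Pr where "linear Pr" "\<And>x. Pr x \<in> S" "\<And>x d. d \<in> S \<Longrightarrow> inner (x - Pr x) d = 0"
    "\<And>x. norm (Pr x) \<le> norm x"
proof -
  obtain T where T: "0 \<notin> T" "T \<subseteq> S" "pairwise orthogonal T" "span T = S"
    using orthogonal_basis_subspace[OF assms] by metis
  define Pr where "Pr x = (\<Sum>b\<in>T. (b \<bullet> x / (b \<bullet> b)) *\<^sub>R b)" for x
  have lin: "linear Pr"
    unfolding Pr_def
    by (rule linearI) (simp_all add: inner_add_right add_divide_distrib scaleR_add_left sum.distrib scaleR_sum_right)
  have inS: "Pr x \<in> S" for x
    unfolding Pr_def using T assms by (simp add: subspace_sum subspace_scale subsetD)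
  have orth: "inner (x - Pr x) d = 0" if "d \<in> S" for x d
  proof -
    have "orthogonal d (x - Pr x)"
      unfolding Pr_def using Gram_Schmidt_step[OF T(3), of d x] T(4) that by simp
    then show ?thesis by (simp add: orthogonal_def inner_commute)
  qed
  have nrm: "norm (Pr x) \<le> norm x" for x
  proof -
    have "inner (x - Pr x) (Pr x) = 0" using orth inS by blast
    then have "(norm x)^2 = (norm (Pr x))^2 + (norm (x - Pr x))^2"
      by (smt (verit, del_insts) diff_add_cancel inner_commute norm_add_Pythagorean orthogonal_def)
    then have "(norm (Pr x))^2 \<le> (norm x)^2" by simp
    then show ?thesis by (simp add: power_mono_iff)
  qed
  show ?thesis using that lin inS orth nrm by blast
qed

lemma proj_zero:
  fixes Pr :: "'a::euclidean_space \<Rightarrow> 'a"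
  assumes "\<And>x. Pr x \<in> S" "\<And>x d. d \<in> S \<Longrightarrow> inner (x - Pr x) d = 0"
    and "\<forall>d\<in>S. inner h d = 0"
  shows "Pr h = 0"
proof -
  have "inner (h - Pr h) (Pr h) = 0" using assms by blast
  moreover have "inner h (Pr h) = 0" using assms by blast
  ultimately have "inner (Pr h) (Pr h) = 0" by (simp add: inner_diff_left)
  then show ?thesis by simp
qed

lemma proj_inner:
  fixes Pr :: "'a::euclidean_space \<Rightarrow> 'a"
  assumes "\<And>x d. d \<in> S \<Longrightarrow> inner (x - Pr x) d = 0" "u \<in> S"
  shows "inner h u = inner (Pr h) u"
  using assms(1)[OF assms(2), of h] by (simp add: inner_diff_left)

lemma KL_sub:
  fixes G :: "'a::euclidean_space \<Rightarrow> 'a"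
  assumes linG: "linear G" and sym: "\<And>x y. inner (G x) y = inner x (G y)" and L: "subspace L"
  shows "\<exists>\<delta>>0. \<exists>C\<ge>0. \<forall>z\<in>L. norm z < \<delta> \<longrightarrow> (\<forall>g. (\<forall>d\<in>L. inner g d = inner (G (xb + z)) d)
            \<longrightarrow> inner (G z) z / 2 + inner (G xb) z \<le> C * (norm g)^2)"
proof -
  obtain Pr where Prl: "linear Pr" and PrS: "\<And>x. Pr x \<in> L"
    and Pro: "\<And>x d. d \<in> L \<Longrightarrow> inner (x - Pr x) d = 0" and Prn: "\<And>x. norm (Pr x) \<le> norm x"
    using proj_exists[OF L] by metis
  have Prg: "Pr g = Pr (G xb) + Pr (G z)" if "\<forall>d\<in>L. inner g d = inner (G (xb + z)) d" for g z
  proof -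
    have "Pr (g - G (xb + z)) = 0"
      by (rule proj_zero[OF PrS Pro]) (use that in \<open>auto simp: inner_diff_left\<close>)
    then show ?thesis using Prl linG by (simp add: linear_diff linear_add)
  qed
  show ?thesis
  proof (cases "Pr (G xb) = 0")
    case True
    define K where "K = {k\<in>L. Pr (G k) = 0}"
    have subK: "subspace K"
      unfolding K_def subspace_def using L Prl linG
      by (auto simp: subspace_def linear_add linear_cmul linear_0)
    define S' where "S' = {y\<in>L. \<forall>k\<in>K. inner y k = 0}"
    have subS': "subspace S'"
      unfolding S'_def subspace_def using L
      by (auto simp: subspace_def inner_add_left)
    have clS': "closed S'" by (rule closed_subspace[OF subS'])
    have blT: "bounded_linear (\<lambda>y. Pr (G y))"
      using Prl linG by (simp add: linear_conv_bounded_linear bounded_linear_compose)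
    have inj: "\<forall>y\<in>S'. Pr (G y) = 0 \<longrightarrow> y = 0"
    proof (intro ballI impI)
      fix y assume "y \<in> S'" "Pr (G y) = 0"
      then have "y \<in> K" "\<forall>k\<in>K. inner y k = 0" unfolding K_def S'_def by auto
      then have "inner y y = 0" by blast
      then show "y = 0" by simp
    qed
    obtain e where e: "e > 0" "\<And>y. y \<in> S' \<Longrightarrow> norm (Pr (G y)) \<ge> e * norm y"
      using injective_imp_isometric[OF clS' subS' blT inj] by blast
    obtain PK where PKl: "linear PK" and PKS: "\<And>x. PK x \<in> K"
      and PKo: "\<And>x d. d \<in> K \<Longrightarrow> inner (x - PK x) d = 0"
      using proj_exists[OF subK] by metis
    have GK: "inner (G k) u = 0" if "k \<in> K" "u \<in> L" for k u
      using proj_inner[OF Pro that(2), of "G k"] that(1) unfolding K_def by simp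
    have key: "\<forall>z\<in>L. norm z < 1 \<longrightarrow> (\<forall>g. (\<forall>d\<in>L. inner g d = inner (G (xb + z)) d)
            \<longrightarrow> inner (G z) z / 2 + inner (G xb) z \<le> 1/(2*e) * (norm g)^2)"
    proof (intro ballI impI allI)
      fix z g assume zL: "z \<in> L" and "norm z < 1" and g: "\<forall>d\<in>L. inner g d = inner (G (xb + z)) d"
      define z0 where "z0 = PK z"
      define z1 where "z1 = z - z0"
      have z0K: "z0 \<in> K" unfolding z0_def by (rule PKS)
      then have z0L: "z0 \<in> L" unfolding K_def by simp
      have z1L: "z1 \<in> L" unfolding z1_def using zL z0L L by (simp add: subspace_diff)
      have z1S: "z1 \<in> S'" unfolding S'_def z1_def z0_def using z1L PKo by (auto simp: z1_def z0_def)
      have zz: "z = z0 + z1" unfolding z1_def by simp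
      have Tz: "Pr (G z) = Pr (G z1)"
      proof -
        have "Pr (G z0) = 0" using z0K unfolding K_def by simp
        then show ?thesis using zz Prl linG by (simp add: linear_add)
      qed
      have q1: "inner (G z) z = inner (G z1) z1"
      proof -
        have a: "inner (G z0) z0 = 0" "inner (G z0) z1 = 0" using GK z0K z0L z1L by auto
        have b: "inner (G z1) z0 = 0" using a sym by (metis inner_commute)
        show ?thesis using a b zz linG by (simp add: linear_add inner_add_left inner_add_right)
      qed
      have xb0: "inner (G xb) u = 0" if "u \<in> L" for u
        using proj_inner[OF Pro that, of "G xb"] True by simp
      have q2: "inner g z1 = inner (G z1) z1"
      proof -
        have "inner g z1 = inner (G xb) z1 + inner (G z0) z1 + inner (G z1) z1"
          using g z1L zz linG by (simp add: linear_add inner_add_left)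
        then show ?thesis using xb0[OF z1L] GK[OF z0K z1L] by simp
      qed
      have nz1: "e * norm z1 \<le> norm g"
      proof -
        have "e * norm z1 \<le> norm (Pr (G z1))" using e z1S by blast
        also have "\<dots> = norm (Pr g)" using Prg[OF g] True Tz by simp
        also have "\<dots> \<le> norm g" by (rule Prn)
        finally show ?thesis .
      qed
      have "inner (G z) z = inner g z1" using q1 q2 by simp
      also have "\<dots> \<le> norm g * norm z1" by (rule norm_cauchy_schwarz)
      also have "\<dots> \<le> norm g * (norm g / e)" using nz1 e
        by (intro mult_left_mono) (auto simp: field_simps)
      finally have "inner (G z) z \<le> (norm g)^2 / e" by (simp add: power2_eq_square)
      moreover have "inner (G xb) z = 0" by (rule xb0[OF zL])
      ultimately show "inner (G z) z / 2 + inner (G xb) z \<le> 1 / (2 * e) * (norm g)\<^sup>2"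
        using e by (simp add: field_simps)
    qed
    moreover have "(1::real) > 0" "1/(2*e) \<ge> 0" using e by auto
    ultimately show ?thesis by blast
  next
    case False
    define b where "b = Pr (G xb)"
    have bpos: "norm b > 0" using False b_def by simp
    obtain B1 where B1: "B1 > 0" "\<And>x. norm (Pr (G x)) \<le> B1 * norm x"
      using linear_bounded_pos[of "\<lambda>x. Pr (G x)"] Prl linG
      by (metis linear_compose[unfolded o_def])
    obtain B2 where B2: "B2 > 0" "\<And>x. norm (G x) \<le> B2 * norm x"
      using linear_bounded_pos[OF linG] by metis
    define \<delta> where "\<delta> = min 1 (min (norm b / (2 * B1)) ((norm b)^2 / (4 * (norm (G xb) + B2 + 1))))"
    have dpos: "\<delta> > 0" 
    proof -
      have "norm (G xb) + B2 + 1 > 0" using B2 by (smt (verit) norm_ge_zero)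
      then have "(norm b)^2 / (4 * (norm (G xb) + B2 + 1)) > 0" using bpos by simp
      moreover have "norm b / (2 * B1) > 0" using bpos B1 by simp
      ultimately show ?thesis unfolding \<delta>_def by simp
    qed
    have key: "\<forall>z\<in>L. norm z < \<delta> \<longrightarrow> (\<forall>g. (\<forall>d\<in>L. inner g d = inner (G (xb + z)) d)
            \<longrightarrow> inner (G z) z / 2 + inner (G xb) z \<le> 1 * (norm g)^2)"
    proof (intro ballI impI allI)
      fix z g assume zL: "z \<in> L" and zd: "norm z < \<delta>" and g: "\<forall>d\<in>L. inner g d = inner (G (xb + z)) d"
      have d1: "\<delta> \<le> 1" "\<delta> \<le> norm b / (2 * B1)" "\<delta> \<le> (norm b)^2 / (4 * (norm (G xb) + B2 + 1))"
        unfolding \<delta>_def by auto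
      have "norm (Pr (G z)) \<le> B1 * norm z" by (rule B1)
      also have "\<dots> \<le> B1 * \<delta>" using zd B1 by simp
      also have "\<dots> \<le> norm b / 2" using d1(2) B1 by (simp add: field_simps)
      finally have Tz: "norm (Pr (G z)) \<le> norm b / 2" .
      have "norm b / 2 \<le> norm (b + Pr (G z))"
        using norm_triangle_ineq2[of b "- Pr (G z)"] Tz by simp
      also have "\<dots> = norm (Pr g)" using Prg[OF g] b_def by simp
      also have "\<dots> \<le> norm g" by (rule Prn)
      finally have gb: "norm b / 2 \<le> norm g" .
      have "inner (G z) z / 2 + inner (G xb) z \<le> norm (G z) * norm z / 2 + norm (G xb) * norm z"
        using norm_cauchy_schwarz[of "G z" z] norm_cauchy_schwarz[of "G xb" z] by simp
      also have "\<dots> \<le> B2 * norm z * norm z / 2 + norm (G xb) * norm z"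
        using B2(2)[of z] by (simp add: mult_right_mono divide_right_mono)
      also have "\<dots> \<le> (B2 + norm (G xb) + 1) * \<delta>"
      proof -
        have "norm z * norm z \<le> norm z" using zd d1(1)
          by (metis less_le_trans mult_left_le norm_ge_zero order.strict_implies_order)
        then have "norm z * norm z \<le> \<delta>" using zd by linarith
        then have "B2 * (norm z * norm z) \<le> B2 * \<delta>"
          using B2(1) by (simp add: mult_left_mono)
        then have "B2 * norm z * norm z / 2 \<le> B2 * \<delta>"
          using B2(1) dpos by (simp add: mult.assoc)
        moreover have "norm (G xb) * norm z \<le> norm (G xb) * \<delta>" using zd by (simp add: mult_left_mono)
        ultimately show ?thesis using dpos by (simp add: algebra_simps)
      qed
      also have "\<dots> \<le> (norm b)^2 / 4"
      proof -
        have N: "4 * (norm (G xb) + B2 + 1) > 0" using B2 by (smt (verit) norm_ge_zero)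
        have "\<delta> * (4 * (norm (G xb) + B2 + 1)) \<le> (norm b)^2"
          using d1(3) N by (simp add: le_divide_eq)
        then show ?thesis by (simp add: algebra_simps)
      qed
      also have "\<dots> \<le> 1 * (norm g)^2"
      proof -
        have "(norm b / 2)^2 \<le> (norm g)^2" using gb by (intro power_mono) auto
        then show ?thesis by (simp add: power_divide)
      qed
      finally show "inner (G z) z / 2 + inner (G xb) z \<le> 1 * (norm g)\<^sup>2" .
    qed
    moreover have "(1::real) \<ge> 0" by simp
    ultimately show ?thesis using dpos by blast
  qed
qed


definition FP :: "'a::real_inner set \<Rightarrow> bool" where
  "FP C \<longleftrightarrow> (\<forall>xb\<in>C. \<exists>\<delta>>0. \<exists>Ls. finite Ls \<and> (\<forall>L\<in>Ls. subspace L) \<and>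
     (\<forall>x\<in>C. dist x xb < \<delta> \<longrightarrow> (\<exists>L\<in>Ls. x - xb \<in> L \<and> (\<forall>n\<in>normal_cone C x. \<forall>d\<in>L. inner n d = 0))))"

lemma FP_Times:
  fixes C1 C2 :: "'a::real_inner set"
  assumes "FP C1" "FP C2" "xb \<in> C1 \<times> C2"
  shows "\<exists>\<delta>>0. \<exists>Ls. finite Ls \<and> (\<forall>L\<in>Ls. subspace L) \<and>
     (\<forall>x\<in>C1 \<times> C2. dist x xb < \<delta> \<longrightarrow> (\<exists>L\<in>Ls. x - xb \<in> L \<and>
        (\<forall>n1\<in>normal_cone C1 (fst x). \<forall>n2\<in>normal_cone C2 (snd x). \<forall>d\<in>L. inner (n1, n2) d = 0)))"
proof -
  obtain d1 Ls1 where d1: "d1 > 0" "finite Ls1" "\<forall>L\<in>Ls1. subspace L"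
    "\<forall>x\<in>C1. dist x (fst xb) < d1 \<longrightarrow> (\<exists>L\<in>Ls1. x - fst xb \<in> L \<and> (\<forall>n\<in>normal_cone C1 x. \<forall>d\<in>L. inner n d = 0))"
    using assms(1,3) unfolding FP_def by (metis mem_Times_iff)
  obtain d2 Ls2 where d2: "d2 > 0" "finite Ls2" "\<forall>L\<in>Ls2. subspace L"
    "\<forall>x\<in>C2. dist x (snd xb) < d2 \<longrightarrow> (\<exists>L\<in>Ls2. x - snd xb \<in> L \<and> (\<forall>n\<in>normal_cone C2 x. \<forall>d\<in>L. inner n d = 0))"
    using assms(2,3) unfolding FP_def by (metis mem_Times_iff)
  define Ls where "Ls = (\<lambda>(L1, L2). L1 \<times> L2) ` (Ls1 \<times> Ls2)"
  have "finite Ls" unfolding Ls_def using d1 d2 by simp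
  moreover have "\<forall>L\<in>Ls. subspace L" unfolding Ls_def using d1 d2 by (auto intro: subspace_Times)
  moreover have "\<forall>x\<in>C1 \<times> C2. dist x xb < min d1 d2 \<longrightarrow> (\<exists>L\<in>Ls. x - xb \<in> L \<and>
        (\<forall>n1\<in>normal_cone C1 (fst x). \<forall>n2\<in>normal_cone C2 (snd x). \<forall>d\<in>L. inner (n1, n2) d = 0))"
  proof (intro ballI impI)
    fix x assume x: "x \<in> C1 \<times> C2" and dx: "dist x xb < min d1 d2"
    have "dist (fst x) (fst xb) < d1" using dx dist_fst_le[of x xb] by linarith
    then obtain L1 where L1: "L1 \<in> Ls1" "fst x - fst xb \<in> L1" "\<forall>n\<in>normal_cone C1 (fst x). \<forall>d\<in>L1. inner n d = 0"
      using d1(4) x by (metis mem_Times_iff)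
    have "dist (snd x) (snd xb) < d2" using dx dist_snd_le[of x xb] by linarith
    then obtain L2 where L2: "L2 \<in> Ls2" "snd x - snd xb \<in> L2" "\<forall>n\<in>normal_cone C2 (snd x). \<forall>d\<in>L2. inner n d = 0"
      using d2(4) x by (metis mem_Times_iff)
    show "\<exists>L\<in>Ls. x - xb \<in> L \<and>
        (\<forall>n1\<in>normal_cone C1 (fst x). \<forall>n2\<in>normal_cone C2 (snd x). \<forall>d\<in>L. inner (n1, n2) d = 0)"
    proof (intro bexI[of _ "L1 \<times> L2"] conjI ballI)
      show "x - xb \<in> L1 \<times> L2" using L1 L2 by (simp add: mem_Times_iff)
      show "L1 \<times> L2 \<in> Ls" using L1 L2 unfolding Ls_def by auto
      fix n1 n2 d assume "n1 \<in> normal_cone C1 (fst x)" "n2 \<in> normal_cone C2 (snd x)" "d \<in> L1 \<times> L2"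
      then show "inner (n1, n2) d = 0" using L1 L2 by (cases d) (auto simp: inner_Pair)
    qed
  qed
  moreover have "min d1 d2 > 0" using d1 d2 by simp
  ultimately show ?thesis by blast
qed

lemma KL_fin:
  fixes G :: "'a::euclidean_space \<Rightarrow> 'a"
  assumes linG: "linear G" and sym: "\<And>x y. inner (G x) y = inner x (G y)"
    and fin: "finite Ls" and sub: "\<forall>L\<in>Ls. subspace L"
  shows "\<exists>\<delta>>0. \<exists>C\<ge>0. \<forall>L\<in>Ls. \<forall>z\<in>L. norm z < \<delta> \<longrightarrow> (\<forall>g. (\<forall>d\<in>L. inner g d = inner (G (xb + z)) d)
            \<longrightarrow> inner (G z) z / 2 + inner (G xb) z \<le> C * (norm g)^2)"
  using fin sub
proof (induction Ls rule: finite_induct)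
  case empty
  then show ?case by (intro exI[of _ 1]) auto
next
  case (insert L Ls)
  obtain d1 c1 where h1: "d1 > 0" "c1 \<ge> 0" "\<forall>L\<in>Ls. \<forall>z\<in>L. norm z < d1 \<longrightarrow> (\<forall>g. (\<forall>d\<in>L. inner g d = inner (G (xb + z)) d)
            \<longrightarrow> inner (G z) z / 2 + inner (G xb) z \<le> c1 * (norm g)^2)"
    using insert by auto
  obtain d2 c2 where h2: "d2 > 0" "c2 \<ge> 0" "\<forall>z\<in>L. norm z < d2 \<longrightarrow> (\<forall>g. (\<forall>d\<in>L. inner g d = inner (G (xb + z)) d)
            \<longrightarrow> inner (G z) z / 2 + inner (G xb) z \<le> c2 * (norm g)^2)"
    using KL_sub[OF linG sym, of L xb] insert.prems by auto
  have "\<forall>L'\<in>insert L Ls. \<forall>z\<in>L'. norm z < min d1 d2 \<longrightarrow> (\<forall>g. (\<forall>d\<in>L'. inner g d = inner (G (xb + z)) d)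
            \<longrightarrow> inner (G z) z / 2 + inner (G xb) z \<le> max c1 c2 * (norm g)^2)"
  proof (intro ballI impI allI)
    fix L' z g assume L': "L' \<in> insert L Ls" and z: "z \<in> L'" "norm z < min d1 d2"
      and g: "\<forall>d\<in>L'. inner g d = inner (G (xb + z)) d"
    have m1: "c1 * (norm g)^2 \<le> max c1 c2 * (norm g)^2" by (simp add: mult_right_mono)
    have m2: "c2 * (norm g)^2 \<le> max c1 c2 * (norm g)^2" by (simp add: mult_right_mono)
    show "inner (G z) z / 2 + inner (G xb) z \<le> max c1 c2 * (norm g)^2"
    proof (cases "L' = L")
      case True
      then show ?thesis using h2(3) z g m2 by force
    next
      case False
      then have "L' \<in> Ls" using L' by simp
      then show ?thesis using h1(3) z g m1 by force
    qed
  qed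
  moreover have "min d1 d2 > 0" "max c1 c2 \<ge> 0" using h1 h2 by auto
  ultimately show ?case by blast
qed

lemma argmin_var:
  fixes g :: "'a::real_inner"
  assumes S: "convex S" and u: "u \<in> S" and min: "\<forall>p\<in>S. \<psi> u \<le> \<psi> p"
    and eq: "\<And>p. \<psi> p = \<psi> u + inner g (p - u) + a * (norm (p - u))^2" and a: "a \<ge> 0"
    and p: "p \<in> S"
  shows "inner g (p - u) \<ge> 0"
proof (rule ccontr)
  assume "\<not> ?thesis"
  then have s: "inner g (p - u) < 0" by simp
  define N where "N = a * (norm (p - u))^2 + 1"
  have Npos: "N > 0" unfolding N_def using a by (simp add: add_nonneg_pos)
  define t where "t = min 1 (- inner g (p - u) / (2 * N))"
  have t: "t > 0" "t \<le> 1" "t \<le> - inner g (p - u) / (2 * N)" unfolding t_def using s Npos by (auto simp: divide_neg_pos)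
  define v where "v = u + t *\<^sub>R (p - u)"
  have "v = (1 - t) *\<^sub>R u + t *\<^sub>R p" unfolding v_def by (simp add: algebra_simps)
  then have vS: "v \<in> S" using S u p t by (simp add: convex_def)
  have "\<psi> v = \<psi> u + t * inner g (p - u) + a * t^2 * (norm (p - u))^2"
    using eq[of v] unfolding v_def by (simp add: power_mult_distrib abs_of_pos t(1) power2_eq_square)
  moreover have "\<psi> u \<le> \<psi> v" using min vS by blast
  ultimately have "0 \<le> t * (inner g (p - u) + t * (a * (norm (p - u))^2))"
    by (simp add: algebra_simps power2_eq_square)
  then have h: "0 \<le> inner g (p - u) + t * (a * (norm (p - u))^2)" using t(1)
    by (simp add: zero_le_mult_iff)
  have "t * (a * (norm (p - u))^2) \<le> t * N" unfolding N_def using t by simp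
  also have "\<dots> = N * t" by simp
  also have "\<dots> \<le> N * (- inner g (p - u) / (2 * N))"
    by (rule mult_left_mono[OF t(3)]) (use Npos in linarith)
  also have "\<dots> = - inner g (p - u) / 2" using Npos by simp
  finally show False using h s by linarith
qed


definition Phi :: "('a::real_inner \<Rightarrow> 'a) \<Rightarrow> real \<Rightarrow> 'a \<Rightarrow> 'a \<Rightarrow> real" where
  "Phi A \<rho> p q = - inner (A p) q + \<rho>/2 * (norm (p - q))^2"

definition Gop :: "('a::real_inner \<Rightarrow> 'a) \<Rightarrow> real \<Rightarrow> 'a \<times> 'a \<Rightarrow> 'a \<times> 'a" where
  "Gop A \<rho> x = (- A (snd x) + \<rho> *\<^sub>R (fst x - snd x), - A (fst x) + \<rho> *\<^sub>R (snd x - fst x))"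

lemma Gop_linear: "linear A \<Longrightarrow> linear (Gop A \<rho>)"
  unfolding Gop_def
  by (rule linearI) (auto simp: linear_add linear_cmul algebra_simps)

lemma Gop_sym:
  assumes symA: "\<And>x y. inner (A x) y = inner x (A y)"
  shows "inner (Gop A \<rho> x) y = inner x (Gop A \<rho> y)"
proof -
  obtain a b where x: "x = (a, b)" by (cases x)
  obtain c d where y: "y = (c, d)" by (cases y)
  have "inner (A b) c = inner a (A d) + (inner (A b) c - inner a (A d))" by simp
  show ?thesis unfolding x y Gop_def
    using symA[of b c] symA[of a d]
    by (simp add: inner_Pair inner_add_left inner_add_right inner_diff_left inner_diff_right inner_commute algebra_simps)
qed

lemma Phi_Gop:
  assumes symA: "\<And>x y. inner (A x) y = inner x (A y)"
  shows "Phi A \<rho> p q = inner (Gop A \<rho> (p, q)) (p, q) / 2"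
  unfolding Phi_def Gop_def using symA[of q p]
  by (simp add: inner_Pair power2_norm_eq_inner inner_add_left inner_diff_left inner_diff_right inner_commute algebra_simps)

lemma Phi_p_expand:
  assumes symA: "\<And>x y. inner (A x) y = inner x (A y)" and linA: "linear A"
  shows "Phi A \<rho> p q = Phi A \<rho> u q + inner (- A q + \<rho> *\<^sub>R (u - q)) (p - u) + \<rho>/2 * (norm (p - u))^2"
  unfolding Phi_def using symA[of p q] symA[of u q]
  by (simp add: power2_norm_eq_inner inner_add_left inner_diff_left inner_diff_right inner_commute algebra_simps)

lemma Phi_q_expand:
  assumes symA: "\<And>x y. inner (A x) y = inner x (A y)" and linA: "linear A"
  shows "Phi A \<rho> u q = Phi A \<rho> u v + inner (- A u + \<rho> *\<^sub>R (v - u)) (q - v) + \<rho>/2 * (norm (q - v))^2"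
  unfolding Phi_def
  by (simp add: power2_norm_eq_inner inner_add_left inner_diff_left inner_diff_right inner_commute algebra_simps)


lemma amgm_step:
  fixes x p q :: real
  assumes "x \<ge> 0" "p \<ge> 0" "q \<ge> 0" "x^2 \<le> p * q"
  shows "2 * x \<le> p + q"
proof -
  have e1: "(p + q)^2 = (p - q)^2 + 4 * (p * q)" by (simp add: power2_eq_square algebra_simps)
  have e2: "(2 * x)^2 = 4 * x^2" by (simp add: power2_eq_square)
  have "(2 * x)^2 \<le> (p + q)^2" using e1 e2 assms(4) zero_le_power2[of "p - q"] by linarith
  then show ?thesis by (rule power2_le_imp_le) (use assms in simp)
qed

lemma abstract_conv:
  fixes A :: "'a::euclidean_space \<Rightarrow> 'a" and C1 C2 :: "'a set" and \<rho> :: real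
    and \<pi> w :: "nat \<Rightarrow> 'a"
  assumes linA: "linear A" and symA: "\<And>x y. inner (A x) y = inner x (A y)" and rho: "\<rho> > 0"
    and cvx1: "convex C1" and cvx2: "convex C2" and cp1: "compact C1" and cp2: "compact C2"
    and fp1: "FP C1" and fp2: "FP C2"
    and st1: "\<And>k. \<pi> (Suc k) \<in> C1 \<and> (\<forall>p\<in>C1. Phi A \<rho> (\<pi> (Suc k)) (w k) \<le> Phi A \<rho> p (w k))"
    and st2: "\<And>k. w (Suc k) \<in> C2 \<and> (\<forall>q\<in>C2. Phi A \<rho> (\<pi> (Suc k)) (w (Suc k)) \<le> Phi A \<rho> (\<pi> (Suc k)) q)"
  shows "\<exists>pb wb. ((\<lambda>k. (\<pi> k, w k)) \<longlongrightarrow> (pb, wb)) sequentially \<and> pb \<in> C1 \<and> wb \<in> C2 \<and>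
           - (- A wb + \<rho> *\<^sub>R (pb - wb)) \<in> normal_cone C1 pb \<and>
           - (- A pb + \<rho> *\<^sub>R (wb - pb)) \<in> normal_cone C2 wb"
proof -
  define G where "G = Gop A \<rho>"
  have linG: "linear G" unfolding G_def by (rule Gop_linear[OF linA])
  have symG: "\<And>x y. inner (G x) y = inner x (G y)" unfolding G_def by (rule Gop_sym[OF symA])
  define F where "F x = inner (G x) x / 2" for x
  have FPhi: "F (p, q) = Phi A \<rho> p q" for p q unfolding F_def G_def using Phi_Gop[OF symA] by simp
  define gp where "gp k = - A (w k) + \<rho> *\<^sub>R (\<pi> (Suc k) - w k)" for k
  define gq where "gq k = - A (\<pi> (Suc k)) + \<rho> *\<^sub>R (w (Suc k) - \<pi> (Suc k))" for k
  have pC: "\<pi> (Suc k) \<in> C1" for k using st1 by blast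
  have wC: "w (Suc k) \<in> C2" for k using st2 by blast
  have opt1: "inner (gp k) (p - \<pi> (Suc k)) \<ge> 0" if "p \<in> C1" for k p
  proof -
    have e: "\<And>p'. Phi A \<rho> p' (w k) = Phi A \<rho> (\<pi> (Suc k)) (w k) + inner (gp k) (p' - \<pi> (Suc k)) + \<rho>/2 * (norm (p' - \<pi> (Suc k)))^2"
      unfolding gp_def by (rule Phi_p_expand[OF symA linA])
    show ?thesis
      by (rule argmin_var[where \<psi>="\<lambda>p. Phi A \<rho> p (w k)", OF cvx1 pC _ e _ that]) (use st1 rho in auto)
  qed
  have opt2: "inner (gq k) (q - w (Suc k)) \<ge> 0" if "q \<in> C2" for k q
  proof -
    have e: "\<And>q'. Phi A \<rho> (\<pi> (Suc k)) q' = Phi A \<rho> (\<pi> (Suc k)) (w (Suc k)) + inner (gq k) (q' - w (Suc k)) + \<rho>/2 * (norm (q' - w (Suc k)))^2"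
      unfolding gq_def by (rule Phi_q_expand[OF symA linA])
    show ?thesis
      by (rule argmin_var[where \<psi>="\<lambda>q. Phi A \<rho> (\<pi> (Suc k)) q", OF cvx2 wC _ e _ that]) (use st2 rho in auto)
  qed
  have dec1: "Phi A \<rho> (\<pi> (Suc k)) (w k) + \<rho>/2 * (norm (p - \<pi> (Suc k)))^2 \<le> Phi A \<rho> p (w k)"
    if "p \<in> C1" for k p
    using Phi_p_expand[OF symA linA, of \<rho> p "w k" "\<pi> (Suc k)"] opt1[OF that, of k]
    unfolding gp_def by simp
  have dec2: "Phi A \<rho> (\<pi> (Suc k)) (w (Suc k)) + \<rho>/2 * (norm (q - w (Suc k)))^2 \<le> Phi A \<rho> (\<pi> (Suc k)) q"
    if "q \<in> C2" for k q
    using Phi_q_expand[OF symA linA, of \<rho> "\<pi> (Suc k)" q "w (Suc k)"] opt2[OF that, of k]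
    unfolding gq_def by simp
  define y where "y k = (\<pi> (Suc k), w (Suc k))" for k
  have yC: "y k \<in> C1 \<times> C2" for k unfolding y_def using pC wC by simp
  define Y where "Y k = F (y k)" for k
  define D where "D k = norm (y (Suc k) - y k)" for k
  have Dnn: "D k \<ge> 0" for k unfolding D_def by simp
  have decY: "Y (Suc k) + \<rho>/2 * (D k)^2 \<le> Y k" for k
  proof -
    have a: "Y (Suc k) + \<rho>/2 * (norm (w (Suc k) - w (Suc (Suc k))))^2 \<le> Phi A \<rho> (\<pi> (Suc (Suc k))) (w (Suc k))"
      unfolding Y_def y_def FPhi using dec2[OF wC, of "Suc k" ] by simp
    have b: "Phi A \<rho> (\<pi> (Suc (Suc k))) (w (Suc k)) + \<rho>/2 * (norm (\<pi> (Suc k) - \<pi> (Suc (Suc k))))^2 \<le> Y k"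
      unfolding Y_def y_def FPhi using dec1[OF pC, of "Suc k"] by simp
    have c: "(D k)^2 = (norm (\<pi> (Suc k) - \<pi> (Suc (Suc k))))^2 + (norm (w (Suc k) - w (Suc (Suc k))))^2"
      unfolding D_def y_def by (simp add: norm_Pair norm_minus_commute)
    show ?thesis using a b c by (simp add: algebra_simps)
  qed
  have nc1: "- gp k \<in> normal_cone C1 (\<pi> (Suc k))" for k
    unfolding normal_cone_def using opt1 by (auto simp: inner_minus_left)
  have nc2: "- gq k \<in> normal_cone C2 (w (Suc k))" for k
    unfolding normal_cone_def using opt2 by (auto simp: inner_minus_left)
  obtain B where B: "B > 0" "\<And>x. norm (A x) \<le> B * norm x"
    using linear_bounded_pos[OF linA] by metis
  define Lc where "Lc = B + \<rho>"
  have Lc: "Lc > 0" unfolding Lc_def using B rho by simp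
  have res: "norm (G (y (Suc k)) + (- gp (Suc k), - gq (Suc k))) \<le> Lc * D k" for k
  proof -
    define u where "u = w (Suc k) - w (Suc (Suc k))"
    have eq: "G (y (Suc k)) + (- gp (Suc k), - gq (Suc k)) = (A u + \<rho> *\<^sub>R u, 0)"
      unfolding G_def Gop_def y_def gp_def gq_def u_def using linA
      by (simp add: linear_diff algebra_simps)
    have "norm (A u + \<rho> *\<^sub>R u) \<le> B * norm u + \<rho> * norm u"
      using norm_triangle_ineq[of "A u" "\<rho> *\<^sub>R u"] B(2)[of u] rho by simp
    moreover have "norm u \<le> D k"
      unfolding u_def D_def y_def using norm_snd_le[of "w (Suc (Suc k)) - w (Suc k)" "\<pi> (Suc (Suc k)) - \<pi> (Suc k)"]
      by (simp add: norm_minus_commute)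
    ultimately have "norm (A u + \<rho> *\<^sub>R u) \<le> Lc * norm u" "norm u \<le> D k"
      by (simp_all add: Lc_def distrib_right)
    moreover have "Lc * norm u \<le> Lc * D k" using \<open>norm u \<le> D k\<close> Lc by (simp add: mult_left_mono)
    ultimately show ?thesis unfolding eq by simp
  qed
  have "seq_compact (C1 \<times> C2)" using compact_imp_seq_compact compact_Times cp1 cp2 by blast
  then obtain xb r where xb: "xb \<in> C1 \<times> C2" and r: "strict_mono r" and yr: "(y \<circ> r) \<longlonglongrightarrow> xb"
    using yC unfolding seq_compact_def by metis
  have blG: "bounded_linear G" using linG by (simp add: linear_conv_bounded_linear)
  have contF: "(\<lambda>j. F (X j)) \<longlonglongrightarrow> F l" if "X \<longlonglongrightarrow> l" for X l
    unfolding F_def by (intro tendsto_intros bounded_linear.tendsto[OF blG] that) simp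
  define v where "v = F xb"
  have Yr: "(Y \<circ> r) \<longlonglongrightarrow> v" unfolding v_def Y_def comp_def
    using contF[OF yr[unfolded comp_def]] by simp
  have decseqY: "decseq Y"
  proof (rule decseq_SucI)
    fix k
    have "\<rho>/2 * (D k)^2 \<ge> 0" using rho by simp
    then show "Y (Suc k) \<le> Y k" using decY[of k] by linarith
  qed
  have Yge: "v \<le> Y k" for k
  proof (rule LIMSEQ_le_const2[OF Yr])
    show "\<exists>N. \<forall>n\<ge>N. (Y \<circ> r) n \<le> Y k"
    proof (intro exI[of _ k] allI impI)
      fix n assume "k \<le> n"
      then have "k \<le> r n" using seq_suble[OF r, of n] by linarith
      then show "(Y \<circ> r) n \<le> Y k" using decseqD[OF decseqY] by simp
    qed
  qed
  obtain Lv where Lv: "Y \<longlonglongrightarrow> Lv" using decseq_convergent[OF decseqY, of v] Yge by metis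
  have "Lv = v" using LIMSEQ_unique[OF LIMSEQ_subseq_LIMSEQ[OF Lv r] Yr] .
  with Lv have Ylim: "Y \<longlonglongrightarrow> v" by simp
  define e where "e k = sqrt (Y (Suc k) - v)" for k
  have enn: "e k \<ge> 0" for k unfolding e_def using Yge by simp
  have elim: "e \<longlonglongrightarrow> 0"
  proof -
    have "(\<lambda>k. Y (Suc k) - v) \<longlonglongrightarrow> v - v" by (intro tendsto_intros LIMSEQ_Suc Ylim)
    then have "(\<lambda>k. sqrt (Y (Suc k) - v)) \<longlonglongrightarrow> sqrt (v - v)" by (rule tendsto_real_sqrt)
    then show ?thesis unfolding e_def by simp
  qed
  have Dlim: "D \<longlonglongrightarrow> 0"
  proof (rule real_tendsto_sandwich[of "\<lambda>_. 0" _ _ "\<lambda>k. sqrt ((Y k - Y (Suc k)) / (\<rho>/2))"])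
    show "\<forall>\<^sub>F n in sequentially. 0 \<le> D n" using Dnn by simp
    show "\<forall>\<^sub>F n in sequentially. D n \<le> sqrt ((Y n - Y (Suc n)) / (\<rho>/2))"
    proof (intro always_eventually allI)
      fix n
      have "(D n)^2 \<le> (Y n - Y (Suc n)) / (\<rho>/2)" using decY[of n] rho by (simp add: field_simps)
      then show "D n \<le> sqrt ((Y n - Y (Suc n)) / (\<rho>/2))" using Dnn real_le_rsqrt by blast
    qed
    show "(\<lambda>_. 0) \<longlonglongrightarrow> (0::real)" by simp
    have "(\<lambda>k. (Y k - Y (Suc k)) / (\<rho>/2)) \<longlonglongrightarrow> (v - v) / (\<rho>/2)"
      by (intro tendsto_intros Ylim LIMSEQ_Suc) (use rho in simp)
    then have "(\<lambda>k. sqrt ((Y k - Y (Suc k)) / (\<rho>/2))) \<longlonglongrightarrow> sqrt ((v - v) / (\<rho>/2))"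
      by (rule tendsto_real_sqrt)
    then show "(\<lambda>k. sqrt ((Y k - Y (Suc k)) / (\<rho>/2))) \<longlonglongrightarrow> 0" by simp
  qed
  obtain \<delta> C where dC: "\<delta> > 0" "C \<ge> 0"
    and KL: "\<And>x n1 n2. x \<in> C1 \<times> C2 \<Longrightarrow> dist x xb < \<delta> \<Longrightarrow> n1 \<in> normal_cone C1 (fst x) \<Longrightarrow>
        n2 \<in> normal_cone C2 (snd x) \<Longrightarrow> F x - v \<le> C * (norm (G x + (n1, n2)))^2"
  proof -
    obtain d1 Ls where d1: "d1 > 0" "finite Ls" "\<forall>L\<in>Ls. subspace L"
      and hL: "\<forall>x\<in>C1 \<times> C2. dist x xb < d1 \<longrightarrow> (\<exists>L\<in>Ls. x - xb \<in> L \<and>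
        (\<forall>n1\<in>normal_cone C1 (fst x). \<forall>n2\<in>normal_cone C2 (snd x). \<forall>d\<in>L. inner (n1, n2) d = 0))"
      using FP_Times[OF fp1 fp2 xb] by metis
    obtain d2 C where d2: "d2 > 0" "C \<ge> 0"
      and hK: "\<forall>L\<in>Ls. \<forall>z\<in>L. norm z < d2 \<longrightarrow> (\<forall>g. (\<forall>d\<in>L. inner g d = inner (G (xb + z)) d)
            \<longrightarrow> inner (G z) z / 2 + inner (G xb) z \<le> C * (norm g)^2)"
      using KL_fin[OF linG symG d1(2,3), of xb] by metis
    show ?thesis
    proof (rule that[of "min d1 d2" C])
      show "min d1 d2 > 0" "C \<ge> 0" using d1 d2 by auto
      fix x n1 n2 assume x: "x \<in> C1 \<times> C2" and dx: "dist x xb < min d1 d2"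
        and n1: "n1 \<in> normal_cone C1 (fst x)" and n2: "n2 \<in> normal_cone C2 (snd x)"
      obtain L where L: "L \<in> Ls" "x - xb \<in> L"
        and orth: "\<forall>d\<in>L. inner (n1, n2) d = 0"
        using hL x dx n1 n2 by force
      define z where "z = x - xb"
      have xz: "x = xb + z" unfolding z_def by simp
      have nz: "norm z < d2" unfolding z_def using dx by (simp add: dist_norm)
      have "\<forall>d\<in>L. inner (G x + (n1, n2)) d = inner (G (xb + z)) d"
        using orth xz by (simp add: inner_add_left)
      then have k: "inner (G z) z / 2 + inner (G xb) z \<le> C * (norm (G x + (n1, n2)))^2"
        using hK L nz unfolding z_def by blast
      have "F x - v = inner (G z) z / 2 + inner (G xb) z"
        unfolding v_def F_def xz using linG symG[of z xb]
        by (simp add: linear_add inner_add_left inner_add_right inner_commute algebra_simps)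
      then show "F x - v \<le> C * (norm (G x + (n1, n2)))^2" using k by simp
    qed
  qed
  define M where "M = 2 * sqrt C * Lc / (\<rho>/2)"
  have Mnn: "M \<ge> 0" unfolding M_def using dC Lc rho by simp
  have stepD: "2 * D (Suc k) \<le> D k + M * (e k - e (Suc k))" if dk: "dist (y (Suc k)) xb < \<delta>" for k
  proof -
    have f1: "fst (y (Suc k)) = \<pi> (Suc (Suc k))" "snd (y (Suc k)) = w (Suc (Suc k))" by (simp_all add: y_def)
    have "F (y (Suc k)) - v \<le> C * (norm (G (y (Suc k)) + (- gp (Suc k), - gq (Suc k))))^2"
      by (rule KL[OF yC dk]) (simp_all only: f1 nc1 nc2)
    also have "\<dots> \<le> C * (Lc * D k)^2"
      using res[of k] dC by (intro mult_left_mono power_mono) auto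
    finally have kl0: "Y (Suc k) - v \<le> C * (Lc * D k)^2" unfolding Y_def .
    have ek2: "(e k)^2 = Y (Suc k) - v" unfolding e_def using Yge[of "Suc k"] by simp
    have "(sqrt C * Lc * D k)^2 = C * (Lc * D k)^2" using dC by (simp add: power_mult_distrib)
    then have kl: "(e k)^2 \<le> (sqrt C * Lc * D k)^2" using kl0 ek2 by simp
    have s1: "e k \<le> sqrt C * Lc * D k"
      using kl by (rule power2_le_imp_le) (use dC Lc Dnn in simp)
    have "Y (Suc (Suc k)) \<le> Y (Suc k)" using decseqD[OF decseqY] by simp
    then have s12: "e (Suc k) \<le> e k" unfolding e_def by simp
    have "(e (Suc k))^2 = Y (Suc (Suc k)) - v" unfolding e_def using Yge[of "Suc (Suc k)"] by simp
    then have "(e k)^2 - (e (Suc k))^2 = Y (Suc k) - Y (Suc (Suc k))" using ek2 by simp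
    then have "\<rho>/2 * (D (Suc k))^2 \<le> (e k)^2 - (e (Suc k))^2" using decY[of "Suc k"] by simp
    also have "\<dots> = (e k + e (Suc k)) * (e k - e (Suc k))" by (simp add: power2_eq_square algebra_simps)
    also have "\<dots> \<le> (2 * e k) * (e k - e (Suc k))"
      using s12 enn by (intro mult_right_mono) auto
    also have "\<dots> \<le> (2 * (sqrt C * Lc * D k)) * (e k - e (Suc k))"
      using s1 s12 by (intro mult_right_mono) auto
    also have "\<dots> = \<rho>/2 * (D k * (M * (e k - e (Suc k))))"
    proof -
      have "\<rho>/2 * M = 2 * sqrt C * Lc" unfolding M_def using rho by simp
      have "\<rho>/2 * (D k * (M * (e k - e (Suc k)))) = (\<rho>/2 * M) * (D k * (e k - e (Suc k)))"
        by (simp only: mult_ac)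
      also have "\<dots> = (2 * sqrt C * Lc) * (D k * (e k - e (Suc k)))" using \<open>\<rho>/2 * M = 2 * sqrt C * Lc\<close> by simp
      finally show ?thesis by (simp only: mult_ac)
    qed
    finally have "\<rho>/2 * (D (Suc k))^2 \<le> \<rho>/2 * (D k * (M * (e k - e (Suc k))))" .
    then have "(D (Suc k))^2 \<le> D k * (M * (e k - e (Suc k)))" using rho by simp
    moreover have "M * (e k - e (Suc k)) \<ge> 0" using Mnn s12 by simp
    ultimately show ?thesis using amgm_step[OF Dnn Dnn] by blast
  qed
  define h where "h j = dist (y (r j)) xb + 2 * D (r j) + M * e (r j)" for j
  have hlim: "h \<longlonglongrightarrow> 0"
  proof -
    have a: "(\<lambda>j. dist (y (r j)) xb) \<longlonglongrightarrow> dist xb xb"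
      using yr unfolding comp_def by (rule tendsto_dist) simp
    have b: "(\<lambda>j. D (r j)) \<longlonglongrightarrow> 0" using LIMSEQ_subseq_LIMSEQ[OF Dlim r] by (simp add: comp_def)
    have c: "(\<lambda>j. e (r j)) \<longlonglongrightarrow> 0" using LIMSEQ_subseq_LIMSEQ[OF elim r] by (simp add: comp_def)
    have "h \<longlonglongrightarrow> dist xb xb + 2 * 0 + M * 0"
      using tendsto_add[OF tendsto_add[OF a tendsto_mult_left[OF b, of 2]] tendsto_mult_left[OF c, of M]]
      unfolding h_def by simp
    then show ?thesis by simp
  qed
  obtain N where "h N < \<delta>" using order_tendstoD(2)[OF hlim dC(1)] by (metis eventually_sequentially order.refl)
  define K where "K = r N"
  have Kd: "dist (y (Suc K)) xb + D K + M * e K < \<delta>"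
  proof -
    have "dist (y (Suc K)) xb \<le> dist (y K) xb + D K" unfolding D_def
      using dist_triangle[of "y (Suc K)" xb "y K"] by (simp add: dist_norm)
    then show ?thesis using \<open>h N < \<delta>\<close> unfolding h_def K_def by simp
  qed
  have tele: "norm (y (Suc k) - y (Suc K)) \<le> (\<Sum>i\<in>{K..<k}. D (Suc i))" if "K \<le> k" for k
    using that
  proof (induction k rule: dec_induct)
    case base then show ?case by simp
  next
    case (step k)
    have "norm (y (Suc (Suc k)) - y (Suc K)) \<le> norm (y (Suc (Suc k)) - y (Suc k)) + norm (y (Suc k) - y (Suc K))"
      using norm_triangle_ineq[of "y (Suc (Suc k)) - y (Suc k)" "y (Suc k) - y (Suc K)"] by simp
    then show ?case using step by (simp add: D_def)
  qed
  have inv: "(\<Sum>i\<in>{K..<k}. D (Suc i)) + D k + M * e k \<le> D K + M * e K" if "K \<le> k" for k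
    using that
  proof (induction k rule: dec_induct)
    case base then show ?case by simp
  next
    case (step k)
    have "dist (y (Suc k)) xb \<le> dist (y (Suc K)) xb + norm (y (Suc k) - y (Suc K))"
      using dist_triangle[of "y (Suc k)" xb "y (Suc K)"] by (simp add: dist_norm)
    also have "\<dots> \<le> dist (y (Suc K)) xb + (\<Sum>i\<in>{K..<k}. D (Suc i))" using tele[OF step(1)] by simp
    also have "\<dots> \<le> dist (y (Suc K)) xb + D K + M * e K"
      using step(3) Dnn[of k] mult_nonneg_nonneg[OF Mnn enn[of k]] by linarith
    finally have "dist (y (Suc k)) xb < \<delta>" using Kd by simp
    from stepD[OF this] have "2 * D (Suc k) \<le> D k + M * (e k - e (Suc k))" by blast
    then show ?case using step(3) step(1) by (simp add: algebra_simps)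
  qed
  have "summable (\<lambda>i. D (i + Suc K))"
  proof (rule summableI_nonneg_bounded[where x="D K + M * e K"])
    show "0 \<le> D (i + Suc K)" for i by (rule Dnn)
    fix n
    have "(\<Sum>i<n. D (i + Suc K)) = (\<Sum>i\<in>{K..<n + K}. D (Suc i))"
      using sum.shift_bounds_nat_ivl[of "\<lambda>i. D (Suc i)" 0 K n] by (simp add: lessThan_atLeast0)
    also have "\<dots> \<le> D K + M * e K" using inv[of "n + K"] Dnn[of "n+K"] mult_nonneg_nonneg[OF Mnn enn[of "n+K"]]
      by simp
    finally show "(\<Sum>i<n. D (i + Suc K)) \<le> D K + M * e K" .
  qed
  then have "summable D" by (simp only: summable_iff_shift)
  then have "summable (\<lambda>k. y (Suc k) - y k)" unfolding D_def by (rule summable_norm_cancel)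
  then have "(\<lambda>n. \<Sum>k<n. y (Suc k) - y k) \<longlonglongrightarrow> (\<Sum>k. y (Suc k) - y k)" by (rule summable_LIMSEQ)
  then have "(\<lambda>n. y 0 + (\<Sum>k<n. y (Suc k) - y k)) \<longlonglongrightarrow> y 0 + (\<Sum>k. y (Suc k) - y k)"
    by (intro tendsto_intros)
  then have ylim0: "y \<longlonglongrightarrow> y 0 + (\<Sum>k. y (Suc k) - y k)" by (simp add: sum_lessThan_telescope)
  have "y 0 + (\<Sum>k. y (Suc k) - y k) = xb"
    using LIMSEQ_unique[OF LIMSEQ_subseq_LIMSEQ[OF ylim0 r] yr] .
  with ylim0 have ylim: "y \<longlonglongrightarrow> xb" by simp
  obtain pb wb where xbe: "xb = (pb, wb)" by (cases xb)
  have plim: "(\<lambda>k. \<pi> (Suc k)) \<longlonglongrightarrow> pb" using tendsto_fst[OF ylim] unfolding y_def xbe by simp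
  have wlim: "(\<lambda>k. w (Suc k)) \<longlonglongrightarrow> wb" using tendsto_snd[OF ylim] unfolding y_def xbe by simp
  have wlim': "w \<longlonglongrightarrow> wb" using wlim filterlim_sequentially_Suc by blast
  have blA: "bounded_linear A" using linA by (simp add: linear_conv_bounded_linear)
  have conv: "((\<lambda>k. (\<pi> k, w k)) \<longlongrightarrow> (pb, wb)) sequentially"
  proof -
    have "(\<lambda>k. (\<pi> (Suc k), w (Suc k))) \<longlonglongrightarrow> (pb, wb)" using ylim unfolding y_def xbe by simp
    then show ?thesis using filterlim_sequentially_Suc[of "\<lambda>k. (\<pi> k, w k)"] by simp
  qed
  have crit1: "- (- A wb + \<rho> *\<^sub>R (pb - wb)) \<in> normal_cone C1 pb"
    unfolding normal_cone_def
  proof (intro CollectI ballI)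
    fix p assume p: "p \<in> C1"
    have "(\<lambda>k. inner (- gp k) (p - \<pi> (Suc k))) \<longlonglongrightarrow> inner (- (- A wb + \<rho> *\<^sub>R (pb - wb))) (p - pb)"
      unfolding gp_def by (intro tendsto_intros bounded_linear.tendsto[OF blA] wlim' plim)
    moreover have "inner (- gp k) (p - \<pi> (Suc k)) \<le> 0" for k using opt1[OF p, of k] by simp
    ultimately show "inner (- (- A wb + \<rho> *\<^sub>R (pb - wb))) (p - pb) \<le> 0"
      by (intro LIMSEQ_le_const2) auto
  qed
  have crit2: "- (- A pb + \<rho> *\<^sub>R (wb - pb)) \<in> normal_cone C2 wb"
    unfolding normal_cone_def
  proof (intro CollectI ballI)
    fix q assume q: "q \<in> C2"
    have "(\<lambda>k. inner (- gq k) (q - w (Suc k))) \<longlonglongrightarrow> inner (- (- A pb + \<rho> *\<^sub>R (wb - pb))) (q - wb)"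
      unfolding gq_def by (intro tendsto_intros bounded_linear.tendsto[OF blA] wlim plim)
    moreover have "inner (- gq k) (q - w (Suc k)) \<le> 0" for k using opt2[OF q, of k] by simp
    ultimately show "inner (- (- A pb + \<rho> *\<^sub>R (wb - pb))) (q - wb) \<le> 0"
      by (intro LIMSEQ_le_const2) auto
  qed
  have "pb \<in> C1" "wb \<in> C2" using xb xbe by auto
  then show ?thesis using conv crit1 crit2 by blast
qed


lemma inner_trace:
  fixes M q :: "real^'m^'n"
  shows "inner M q = trace (M ** transpose q)"
  by (simp add: inner_vec_def trace_def matrix_matrix_mult_def transpose_def)

lemma gw_obj_inner: "gw_obj DX DY p q = - inner (DX ** p ** DY) q"
  unfolding gw_obj_def by (simp add: inner_trace)

lemma A_sym:
  fixes DX :: "real^'n^'n" and DY :: "real^'m^'m" and p q :: "real^'m^'n"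
  assumes "transpose DX = DX" "transpose DY = DY"
  shows "inner (DX ** p ** DY) q = inner p (DX ** q ** DY)"
proof -
  have "inner p (DX ** q ** DY) = trace (p ** transpose (DX ** q ** DY))" by (rule inner_trace)
  also have "transpose (DX ** q ** DY) = DY ** transpose q ** DX"
    using assms by (simp add: matrix_transpose_mul matrix_mul_assoc)
  also have "trace (p ** (DY ** transpose q ** DX)) = trace ((p ** DY ** transpose q) ** DX)"
    by (simp add: matrix_mul_assoc)
  also have "\<dots> = trace (DX ** (p ** DY ** transpose q))" by (rule trace_mul_sym)
  also have "\<dots> = trace (DX ** p ** DY ** transpose q)" by (simp add: matrix_mul_assoc)
  also have "\<dots> = inner (DX ** p ** DY) q" by (simp add: inner_trace)
  finally show ?thesis by simp
qed

lemma A_linear: "linear (\<lambda>p::real^'m^'n. (DX::real^'n^'n) ** p ** (DY::real^'m^'m))"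
  by (rule linearI)
     (simp_all add: matrix_add_ldistrib matrix_scalar_ac scalar_matrix_assoc[symmetric]
        matrix_matrix_mult_def vec_eq_iff sum.distrib algebra_simps sum_distrib_left)


definition Cset :: "((real^'m^'n) \<Rightarrow> 'b) \<Rightarrow> 'b \<Rightarrow> (real^'m^'n) set" where
  "Cset lin c = {p. (\<forall>i j. 0 \<le> p $ i $ j) \<and> lin p = c}"

lemma entry_abs_le: "\<bar>(x::real^'m^'n) $ i $ j\<bar> \<le> norm x"
  using component_le_norm_cart[of "x $ i" j] Finite_Cartesian_Product.norm_nth_le[of x i] by linarith

lemma Cset_convex:
  fixes lin :: "real^'m^'n \<Rightarrow> 'b::real_vector"
  assumes lin: "linear lin"
  shows "convex (Cset lin c)"
  unfolding convex_def Cset_def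
proof (intro ballI allI impI CollectI conjI)
  fix x y :: "real^'m^'n" and u v :: real and i j
  assume x: "x \<in> {p. (\<forall>i j. 0 \<le> p $ i $ j) \<and> lin p = c}" and y: "y \<in> {p. (\<forall>i j. 0 \<le> p $ i $ j) \<and> lin p = c}"
    and uv: "0 \<le> u" "0 \<le> v" "u + v = 1"
  show "0 \<le> (u *\<^sub>R x + v *\<^sub>R y) $ i $ j" using x y uv by simp
  have "lin (u *\<^sub>R x + v *\<^sub>R y) = u *\<^sub>R lin x + v *\<^sub>R lin y" using lin by (simp add: linear_add linear_cmul)
  also have "\<dots> = (u + v) *\<^sub>R c" using x y by (simp add: scaleR_add_left)
  finally show "lin (u *\<^sub>R x + v *\<^sub>R y) = c" using uv by simp
qed

lemma Cset_closed:
  fixes lin :: "real^'m^'n \<Rightarrow> 'b::real_normed_vector"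
  assumes lin: "linear lin"
  shows "closed (Cset lin c)"
proof -
  have "Cset lin c = (\<Inter>i. \<Inter>j. {p. 0 \<le> p $ i $ j}) \<inter> {p. lin p = c}"
    unfolding Cset_def by auto
  moreover have "closed {p::real^'m^'n. 0 \<le> p $ i $ j}" for i j
  proof (rule closed_Collect_le)
    show "continuous_on UNIV (\<lambda>p::real^'m^'n. 0::real)" by simp
    have "bounded_linear (\<lambda>p::real^'m^'n. p $ i $ j)"
      by (intro bounded_linear_compose[of "\<lambda>x::real^'m. x $ j" "\<lambda>p::real^'m^'n. p $ i"] bounded_linear_vec_nth)
    then show "continuous_on UNIV (\<lambda>p::real^'m^'n. p $ i $ j)" by (rule linear_continuous_on)
  qed
  moreover have "closed {p. lin p = c}"
  proof (rule closed_Collect_eq)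
    show "continuous_on UNIV lin" using lin by (simp add: linear_continuous_on linear_conv_bounded_linear)
  qed simp
  ultimately show ?thesis by (simp add: closed_INT closed_Int)
qed

lemma bounded_entries:
  assumes "\<forall>p\<in>S. \<forall>i j. \<bar>(p::real^'m^'n) $ i $ j\<bar> \<le> 1"
  shows "bounded S"
proof -
  have "norm p \<le> real CARD('n) * real CARD('m)" if "p \<in> S" for p
  proof -
    have "norm p \<le> (\<Sum>i\<in>UNIV. norm (p $ i))"
      unfolding norm_vec_def by (rule L2_set_le_sum) simp
    also have "\<dots> \<le> (\<Sum>i\<in>(UNIV::'n set). real CARD('m))"
    proof (rule sum_mono)
      fix i
      have "norm (p $ i) \<le> (\<Sum>j\<in>UNIV. \<bar>p $ i $ j\<bar>)" by (rule norm_le_l1_cart)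
      also have "\<dots> \<le> (\<Sum>j\<in>(UNIV::'m set). 1)" using assms that by (intro sum_mono) auto
      finally show "norm (p $ i) \<le> real CARD('m)" by simp
    qed
    finally show ?thesis by simp
  qed
  then show ?thesis unfolding bounded_iff by blast
qed

lemma Cset_FP:
  fixes lin :: "real^'m^'n \<Rightarrow> 'b::real_vector"
  assumes lin: "linear lin"
  shows "FP (Cset lin c)"
  unfolding FP_def
proof (intro ballI)
  fix xb assume xb: "xb \<in> Cset lin c"
  define Lsub where "Lsub S = {d. lin d = 0 \<and> (\<forall>i j. (i, j) \<in> S \<longrightarrow> d $ i $ j = 0)}" for S :: "('n \<times> 'm) set"
  define Ls where "Ls = range Lsub"
  have fin: "finite Ls" unfolding Ls_def by simp
  have sub: "\<forall>L\<in>Ls. subspace L"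
    unfolding Ls_def Lsub_def subspace_def using lin by (auto simp: linear_0 linear_add linear_cmul)
  define mb where "mb x = Min (insert 1 {x $ i $ j | i j. x $ i $ j > 0})" for x :: "real^'m^'n"
  have finpos: "finite {x $ i $ j | i j. x $ i $ j > 0}" for x :: "real^'m^'n"
  proof -
    have "{x $ i $ j | i j. x $ i $ j > 0} \<subseteq> (\<lambda>(i, j). x $ i $ j) ` UNIV" by auto
    then show ?thesis by (rule finite_subset) simp
  qed
  have mb_pos: "mb x > 0" for x unfolding mb_def using finpos[of x] by auto
  have mb_le: "mb x \<le> x $ i $ j" if "x $ i $ j > 0" for x i j
    unfolding mb_def using finpos[of x] that by (intro Min_le) auto
  have "\<forall>x\<in>Cset lin c. dist x xb < mb xb \<longrightarrow> (\<exists>L\<in>Ls. x - xb \<in> L \<and> (\<forall>n\<in>normal_cone (Cset lin c) x. \<forall>d\<in>L. inner n d = 0))"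
  proof (intro ballI impI)
    fix x assume x: "x \<in> Cset lin c" and dx: "dist x xb < mb xb"
    define Z where "Z = {(i, j). x $ i $ j = 0}"
    have "x - xb \<in> Lsub Z"
      unfolding Lsub_def
    proof (intro CollectI conjI allI impI)
      show "lin (x - xb) = 0" using x xb lin by (simp add: Cset_def linear_diff)
      fix i j assume "(i, j) \<in> Z"
      then have x0: "x $ i $ j = 0" unfolding Z_def by simp
      have "xb $ i $ j = 0"
      proof (rule ccontr)
        assume "xb $ i $ j \<noteq> 0"
        moreover have "0 \<le> xb $ i $ j" using xb unfolding Cset_def by simp
        ultimately have pos: "xb $ i $ j > 0" by simp
        have "\<bar>(x - xb) $ i $ j\<bar> \<le> norm (x - xb)" by (rule entry_abs_le)
        also have "\<dots> < mb xb" using dx by (simp add: dist_norm)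
        also have "\<dots> \<le> xb $ i $ j" by (rule mb_le[OF pos])
        finally show False using x0 by simp
      qed
      then show "(x - xb) $ i $ j = 0" using x0 by simp
    qed
    moreover have "\<forall>n\<in>normal_cone (Cset lin c) x. \<forall>d\<in>Lsub Z. inner n d = 0"
    proof (intro ballI)
      fix n d assume n: "n \<in> normal_cone (Cset lin c) x" and d: "d \<in> Lsub Z"
      define t where "t = mb x / (norm d + 1)"
      have tpos: "t > 0" unfolding t_def using mb_pos[of x] by (simp add: add_nonneg_pos)
      have tb: "t * norm d < mb x"
      proof -
        have "t * norm d = mb x * (norm d / (norm d + 1))" unfolding t_def by simp
        also have "\<dots> < mb x * 1" using mb_pos[of x]
          by (intro mult_strict_left_mono) (auto simp: divide_less_eq add_nonneg_pos)
        finally show ?thesis by simp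
      qed
      have inC: "x + s *\<^sub>R d \<in> Cset lin c" if s: "\<bar>s\<bar> = t" for s
        unfolding Cset_def
      proof (intro CollectI conjI allI)
        show "lin (x + s *\<^sub>R d) = c" using x d lin unfolding Cset_def Lsub_def
          by (simp add: linear_add linear_cmul)
        fix i j
        show "0 \<le> (x + s *\<^sub>R d) $ i $ j"
        proof (cases "x $ i $ j = 0")
          case True
          then have "d $ i $ j = 0" using d unfolding Lsub_def Z_def by simp
          then show ?thesis using True by simp
        next
          case False
          moreover have "0 \<le> x $ i $ j" using x unfolding Cset_def by simp
          ultimately have pos: "x $ i $ j > 0" by simp
          have "\<bar>s * d $ i $ j\<bar> = t * \<bar>d $ i $ j\<bar>" using s by (simp add: abs_mult)
          also have "\<dots> \<le> t * norm d" using tpos entry_abs_le[of d i j] by simp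
          also have "\<dots> < mb x" by (rule tb)
          also have "\<dots> \<le> x $ i $ j" by (rule mb_le[OF pos])
          finally show ?thesis by simp
        qed
      qed
      have c1: "x + t *\<^sub>R d \<in> Cset lin c" using inC[of t] tpos by simp
      have c2: "x + (- t) *\<^sub>R d \<in> Cset lin c" using inC[of "- t"] tpos by simp
      have "inner n ((x + t *\<^sub>R d) - x) \<le> 0" using n c1 unfolding normal_cone_def by blast
      then have a: "t * inner n d \<le> 0" by simp
      have "inner n ((x + (- t) *\<^sub>R d) - x) \<le> 0" using n c2 unfolding normal_cone_def by blast
      then have b: "- t * inner n d \<le> 0" by simp
      have "inner n d \<le> 0" using a tpos by (simp add: mult_le_0_iff)
      moreover have "inner n d \<ge> 0" using b tpos by (simp add: zero_le_mult_iff)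
      ultimately show "inner n d = 0" by simp
    qed
    ultimately show "\<exists>L\<in>Ls. x - xb \<in> L \<and> (\<forall>n\<in>normal_cone (Cset lin c) x. \<forall>d\<in>L. inner n d = 0)"
      unfolding Ls_def by blast
  qed
  then show "\<exists>\<delta>>0. \<exists>Ls. finite Ls \<and> (\<forall>L\<in>Ls. subspace L) \<and>
     (\<forall>x\<in>Cset lin c. dist x xb < \<delta> \<longrightarrow> (\<exists>L\<in>Ls. x - xb \<in> L \<and> (\<forall>n\<in>normal_cone (Cset lin c) x. \<forall>d\<in>L. inner n d = 0)))"
    using fin sub mb_pos[of xb] by blast
qed


lemma gw_deriv:
  fixes DX :: "real^'n^'n" and DY :: "real^'m^'m" and pb wb :: "real^'m^'n"
  assumes "transpose DX = DX" "transpose DY = DY"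
  shows "((\<lambda>(p, q). gw_obj DX DY p q) has_derivative
           (\<lambda>h. inner (- (DX ** wb ** DY), - (DX ** pb ** DY)) h)) (at (pb, wb))"
proof -
  define A where "A = (\<lambda>p::real^'m^'n. DX ** p ** DY)"
  have blA: "bounded_linear A" unfolding A_def using A_linear by (simp add: linear_conv_bounded_linear)
  have bl1: "bounded_linear (\<lambda>x::(real^'m^'n) \<times> (real^'m^'n). A (fst x))"
    using bounded_linear_compose[OF blA bounded_linear_fst] .
  have f: "(\<lambda>(p, q). gw_obj DX DY p q) = (\<lambda>x. - inner (A (fst x)) (snd x))"
    unfolding A_def by (auto simp: gw_obj_inner)
  have d: "((\<lambda>x. inner (A (fst x)) (snd x)) has_derivative
       (\<lambda>h. inner (A (fst (pb, wb))) (snd h) + inner (A (fst h)) (snd (pb, wb)))) (at (pb, wb))"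
    by (rule has_derivative_inner[OF bounded_linear_imp_has_derivative[OF bl1]
          bounded_linear_imp_has_derivative[OF bounded_linear_snd]])
  have "((\<lambda>x. - inner (A (fst x)) (snd x)) has_derivative
       (\<lambda>h. - (inner (A (fst (pb, wb))) (snd h) + inner (A (fst h)) (snd (pb, wb))))) (at (pb, wb))"
    by (rule has_derivative_minus[OF d])
  then show ?thesis unfolding f
  proof (rule has_derivative_eq_rhs)
    show "(\<lambda>h. - (inner (A (fst (pb, wb))) (snd h) + inner (A (fst h)) (snd (pb, wb)))) =
          (\<lambda>h. inner (- (DX ** wb ** DY), - (DX ** pb ** DY)) h)"
    proof
      fix h :: "(real^'m^'n) \<times> (real^'m^'n)"
      obtain h1 h2 where h: "h = (h1, h2)" by (cases h)
      have "inner (A h1) wb = inner h1 (A wb)" unfolding A_def by (rule A_sym[OF assms])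
      then show "- (inner (A (fst (pb, wb))) (snd h) + inner (A (fst h)) (snd (pb, wb))) =
          inner (- (DX ** wb ** DY), - (DX ** pb ** DY)) h"
        unfolding h A_def by (simp add: inner_Pair inner_commute)
    qed
  qed
qed

theorem theorem2:
  fixes \<mu> :: "real^'n" and \<nu> :: "real^'m"
    and DX :: "real^'n^'n" and DY :: "real^'m^'m"
    and \<rho> :: real
    and \<pi> w :: "nat \<Rightarrow> real^'m^'n"
  assumes "prob_vec \<mu>" and "prob_vec \<nu>"
    and "transpose DX = DX" and "transpose DY = DY"
    and "\<rho> > 0"
    and "\<And>k. \<pi> (Suc k) \<in> C1 \<mu> \<and>
           (\<forall>p\<in>C1 \<mu>. gw_obj DX DY (\<pi> (Suc k)) (w k) + \<rho>/2 * (norm (\<pi> (Suc k) - w k))^2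
                     \<le> gw_obj DX DY p (w k) + \<rho>/2 * (norm (p - w k))^2)"
    and "\<And>k. w (Suc k) \<in> C2 \<nu> \<and>
           (\<forall>q\<in>C2 \<nu>. gw_obj DX DY (\<pi> (Suc k)) (w (Suc k)) + \<rho>/2 * (norm (w (Suc k) - \<pi> (Suc k)))^2
                     \<le> gw_obj DX DY (\<pi> (Suc k)) q + \<rho>/2 * (norm (q - \<pi> (Suc k)))^2)"
  shows "\<exists>pb wb. ((\<lambda>k. (\<pi> k, w k)) \<longlongrightarrow> (pb, wb)) sequentially \<and>
           critical_F (\<lambda>(p, q). gw_obj DX DY p q) (C1 \<mu>) (C2 \<nu>) \<rho> pb wb"
proof -
  define A where "A = (\<lambda>p::real^'m^'n. DX ** p ** DY)"
  have linA: "linear A" unfolding A_def by (rule A_linear)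
  have symA: "\<And>x y. inner (A x) y = inner x (A y)" unfolding A_def by (rule A_sym[OF assms(3,4)])
  have PhiE: "Phi A \<rho> p q = gw_obj DX DY p q + \<rho>/2 * (norm (p - q))^2" for p q
    unfolding Phi_def A_def by (simp add: gw_obj_inner)
  have C1e: "(C1 \<mu> :: (real^'m^'n) set) = Cset (\<lambda>p. p *v (\<chi> j. 1)) \<mu>" unfolding C1_def Cset_def by simp
  have C2e: "(C2 \<nu> :: (real^'m^'n) set) = Cset (\<lambda>p. transpose p *v (\<chi> i. 1)) \<nu>" unfolding C2_def Cset_def by simp
  have lin1: "linear (\<lambda>p::real^'m^'n. p *v (\<chi> j. 1))"
    by (rule linearI) (simp_all add: vec_eq_iff matrix_vector_mult_def sum.distrib algebra_simps sum_distrib_left)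
  have lin2: "linear (\<lambda>p::real^'m^'n. transpose p *v (\<chi> i. 1))"
    by (rule linearI) (simp_all add: vec_eq_iff matrix_vector_mult_def transpose_def sum.distrib algebra_simps sum_distrib_left)
  have b1: "bounded ((C1 \<mu> :: (real^'m^'n) set))"
  proof (rule bounded_entries, intro ballI allI)
    fix p i j assume p: "p \<in> (C1 \<mu> :: (real^'m^'n) set)"
    have nn: "\<forall>i j. 0 \<le> p $ i $ j" using p unfolding C1_def by simp
    have "p $ i $ j \<le> (\<Sum>j'\<in>UNIV. p $ i $ j')" using nn by (intro member_le_sum) auto
    also have "\<dots> = (p *v (\<chi> j. 1)) $ i" by (simp add: matrix_vector_mult_def)
    also have "\<dots> = \<mu> $ i" using p unfolding C1_def by simp
    also have "\<dots> \<le> (\<Sum>i'\<in>UNIV. \<mu> $ i')" using assms(1) unfolding prob_vec_def by (intro member_le_sum) auto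
    also have "\<dots> = 1" using assms(1) unfolding prob_vec_def by simp
    finally show "\<bar>p $ i $ j\<bar> \<le> 1" using nn by simp
  qed
  have b2: "bounded ((C2 \<nu> :: (real^'m^'n) set))"
  proof (rule bounded_entries, intro ballI allI)
    fix p i j assume p: "p \<in> (C2 \<nu> :: (real^'m^'n) set)"
    have nn: "\<forall>i j. 0 \<le> p $ i $ j" using p unfolding C2_def by simp
    have "p $ i $ j \<le> (\<Sum>i'\<in>UNIV. p $ i' $ j)" using nn by (intro member_le_sum) auto
    also have "\<dots> = (transpose p *v (\<chi> i. 1)) $ j" by (simp add: matrix_vector_mult_def transpose_def)
    also have "\<dots> = \<nu> $ j" using p unfolding C2_def by simp
    also have "\<dots> \<le> (\<Sum>j'\<in>UNIV. \<nu> $ j')" using assms(2) unfolding prob_vec_def by (intro member_le_sum) auto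
    also have "\<dots> = 1" using assms(2) unfolding prob_vec_def by simp
    finally show "\<bar>p $ i $ j\<bar> \<le> 1" using nn by simp
  qed
  have cl1: "closed ((C1 \<mu> :: (real^'m^'n) set))" unfolding C1e by (rule Cset_closed[OF lin1])
  have cl2: "closed ((C2 \<nu> :: (real^'m^'n) set))" unfolding C2e by (rule Cset_closed[OF lin2])
  have cp1: "compact ((C1 \<mu> :: (real^'m^'n) set))" using b1 cl1 by (simp add: compact_eq_bounded_closed)
  have cp2: "compact ((C2 \<nu> :: (real^'m^'n) set))" using b2 cl2 by (simp add: compact_eq_bounded_closed)
  have cv1: "convex ((C1 \<mu> :: (real^'m^'n) set))" unfolding C1e by (rule Cset_convex[OF lin1])
  have cv2: "convex ((C2 \<nu> :: (real^'m^'n) set))" unfolding C2e by (rule Cset_convex[OF lin2])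
  have fp1: "FP ((C1 \<mu> :: (real^'m^'n) set))" unfolding C1e by (rule Cset_FP[OF lin1])
  have fp2: "FP ((C2 \<nu> :: (real^'m^'n) set))" unfolding C2e by (rule Cset_FP[OF lin2])
  have st1: "\<pi> (Suc k) \<in> C1 \<mu> \<and> (\<forall>p\<in>C1 \<mu>. Phi A \<rho> (\<pi> (Suc k)) (w k) \<le> Phi A \<rho> p (w k))" for k
    using assms(6)[of k] unfolding PhiE by simp
  have st2: "w (Suc k) \<in> C2 \<nu> \<and> (\<forall>q\<in>C2 \<nu>. Phi A \<rho> (\<pi> (Suc k)) (w (Suc k)) \<le> Phi A \<rho> (\<pi> (Suc k)) q)" for k
    using assms(7)[of k] unfolding PhiE by (simp add: norm_minus_commute)
  obtain pb wb where conv: "((\<lambda>k. (\<pi> k, w k)) \<longlongrightarrow> (pb, wb)) sequentially" and pb: "pb \<in> C1 \<mu>" and wb: "wb \<in> C2 \<nu>"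
    and cr1: "- (- A wb + \<rho> *\<^sub>R (pb - wb)) \<in> normal_cone (C1 \<mu>) pb"
    and cr2: "- (- A pb + \<rho> *\<^sub>R (wb - pb)) \<in> normal_cone (C2 \<nu>) wb"
    using abstract_conv[where \<pi>=\<pi> and w=w, OF linA symA assms(5) cv1 cv2 cp1 cp2 fp1 fp2 st1 st2] by blast
  have "critical_F (\<lambda>(p, q). gw_obj DX DY p q) (C1 \<mu>) (C2 \<nu>) \<rho> pb wb"
    unfolding critical_F_def
  proof (intro conjI pb wb exI[of _ "(- (DX ** wb ** DY), - (DX ** pb ** DY))"])
    show "((\<lambda>(p, q). gw_obj DX DY p q) has_derivative (\<lambda>h. inner (- (DX ** wb ** DY), - (DX ** pb ** DY)) h)) (at (pb, wb))"
      by (rule gw_deriv[OF assms(3,4)])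
    show "- ((- (DX ** wb ** DY), - (DX ** pb ** DY)) + (\<rho> *\<^sub>R (pb - wb), \<rho> *\<^sub>R (wb - pb)))
          \<in> normal_cone (C1 \<mu>) pb \<times> normal_cone (C2 \<nu>) wb"
      using cr1 cr2 unfolding A_def by simp
  qed
  then show ?thesis using conv by blast
qed

end
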